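(* Let $n\ge 2$ and let $k_1,\dots,k_n$, $a_1,\dots,a_{n-1}$, $b_1,\dots,b_n$ be real or complex numbers ($3n-1$ parameters). Let $A_1$ be the $n\times n$ matrix with entries $$(A_1)_{ij}=\begin{cases} k_i b_j, & i\le j,\\ k_j a_j, & i>j.\end{cases}$$ Define $c_i=k_{i+1}b_i-k_ia_i$ for $i=1,\dots,n-1$, $c_0=1$, $c_n=b_n$; $d_i=k_{i+1}a_{i+1}b_i-k_ia_ib_{i+1}$ for $i=1,\dots,n-2$, $d_0=a_1$; $f_i=a_i-b_i$ for $i=2,\dots,n-1$; $g_i=k_{i+1}-k_i$ for $i=2,\dots,n-1$, $g_n=1$. Assume $k_1\neq 0$ and $c_i\neq 0$ for $i=1,\dots,n$. Then $A_1$ is invertible and its inverse $A_1^{-1}=[\alpha_{ij}]$ is the lower Hessenberg matrix with entries $$\alpha_{ij}=\begin{cases} \dfrac{k_{i+1}b_{i-1}-k_{i-1}a_{i-1}}{c_{i-1}c_i}, & i=j,\ i\neq 1,n,\\[2mm] \dfrac{k_2}{k_1c_1}, & i=j=1,\\[2mm] \dfrac{b_{n-1}}{c_{n-1}c_n}, & i=j=n,\\[2mm] (-1)^{i+j}\dfrac{d_{j-1}\,g_i\prod_{\nu=j+1}^{i-1}k_\nu f_\nu}{\prod_{\nu=j-1}^{i}c_\nu}, & i-j\ge 1,\\[2mm] -\dfrac{1}{c_i}, & j-i=1,\\[2mm] 0, & j-i>1, \end{cases}$$ where the empty product $\prod_{\nu=j+1}^{i-1}k_\nu f_\nu$ (case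 $i=j+1$) is taken to be $1$.
   Context: A lower Hessenberg matrix is a square matrix whose entries $(i,j)$ vanish whenever $j-i>1$. *)

theory Defs
  imports "Jordan_Normal_Form.Matrix"
begin

text \<open>All parameter sequences k, a, b are 1-indexed functions nat => 'a.
  Matrices are Jordan_Normal_Form matrices with 0-based indices; the
  paper's entry (i,j) (1-based) is stored at position (i-1,j-1).\<close>

definition A1_mat :: "nat \<Rightarrow> (nat \<Rightarrow> 'a::field) \<Rightarrow> (nat \<Rightarrow> 'a) \<Rightarrow> (nat \<Rightarrow> 'a) \<Rightarrow> 'a mat" where
  "A1_mat n k a b = mat n n (\<lambda>(i, j). let i' = i + 1; j' = j + 1 in
      if i' \<le> j' then k i' * b j' else k j' * a j')"

definition cc :: "nat \<Rightarrow> (nat \<Rightarrow> 'a::field) \<Rightarrow> (nat \<Rightarrow> 'a) \<Rightarrow> (nat \<Rightarrow> 'a) \<Rightarrow> nat \<Rightarrow> 'a" where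
  "cc n k a b i = (if i = 0 then 1 else if i = n then b n
                   else k (i + 1) * b i - k i * a i)"

definition dd :: "(nat \<Rightarrow> 'a::field) \<Rightarrow> (nat \<Rightarrow> 'a) \<Rightarrow> (nat \<Rightarrow> 'a) \<Rightarrow> nat \<Rightarrow> 'a" where
  "dd k a b i = (if i = 0 then a 1
                 else k (i + 1) * a (i + 1) * b i - k i * a i * b (i + 1))"

definition ff :: "(nat \<Rightarrow> 'a::field) \<Rightarrow> (nat \<Rightarrow> 'a) \<Rightarrow> nat \<Rightarrow> 'a" where
  "ff a b i = a i - b i"

definition gg :: "nat \<Rightarrow> (nat \<Rightarrow> 'a::field) \<Rightarrow> nat \<Rightarrow> 'a" where
  "gg n k i = (if i = n then 1 else k (i + 1) - k i)"

definition alpha :: "nat \<Rightarrow> (nat \<Rightarrow> 'a::field) \<Rightarrow> (nat \<Rightarrow> 'a) \<Rightarrow> (nat \<Rightarrow> 'a) \<Rightarrow> nat \<Rightarrow> nat \<Rightarrow> 'a" where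
  "alpha n k a b i j =
    (if i = j then
       (if i = 1 then k 2 / (k 1 * cc n k a b 1)
        else if i = n then b (n - 1) / (cc n k a b (n - 1) * cc n k a b n)
        else (k (i + 1) * b (i - 1) - k (i - 1) * a (i - 1))
               / (cc n k a b (i - 1) * cc n k a b i))
     else if j < i then
       (-1) ^ (i + j) * dd k a b (j - 1) * gg n k i
         * (\<Prod>\<nu>\<in>{j + 1..i - 1}. k \<nu> * ff a b \<nu>)
         / (\<Prod>\<nu>\<in>{j - 1..i}. cc n k a b \<nu>)
     else if j = i + 1 then - 1 / cc n k a b i
     else 0)"

definition alpha_mat :: "nat \<Rightarrow> (nat \<Rightarrow> 'a::field) \<Rightarrow> (nat \<Rightarrow> 'a) \<Rightarrow> (nat \<Rightarrow> 'a) \<Rightarrow> 'a mat" where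
  "alpha_mat n k a b = mat n n (\<lambda>(i, j). alpha n k a b (i + 1) (j + 1))"

end

theory Submission
  imports Defs "Jordan_Normal_Form.Determinant"
begin

definition tt :: "nat \<Rightarrow> (nat \<Rightarrow> 'a::field) \<Rightarrow> (nat \<Rightarrow> 'a) \<Rightarrow> (nat \<Rightarrow> 'a) \<Rightarrow> nat \<Rightarrow> nat \<Rightarrow> 'a" where
  "tt n k a b j m = (-1) ^ (m + j) * dd k a b (j - 1)
     * (\<Prod>\<nu>\<in>{j + 1..m - 1}. k \<nu> * ff a b \<nu>) / (\<Prod>\<nu>\<in>{j - 1..m - 1}. cc n k a b \<nu>)"

lemma alpha_below:
  assumes "1 \<le> j" "j < i"
  shows "alpha n k a b i j = gg n k i * tt n k a b j i / cc n k a b i"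
proof -
  have e: "{j - 1..i} = insert i {j - 1..i - 1}" using assms by auto
  have "(\<Prod>\<nu>\<in>{j - 1..i}. cc n k a b \<nu>) = cc n k a b i * (\<Prod>\<nu>\<in>{j - 1..i - 1}. cc n k a b \<nu>)"
    unfolding e using assms by (subst prod.insert) auto
  then show ?thesis using assms unfolding alpha_def tt_def
    by (simp add: field_simps)
qed

lemma tt_step:
  assumes "1 \<le> j" "j + 1 \<le> m"
  shows "tt n k a b j (m + 1) = - k m * ff a b m * tt n k a b j m / cc n k a b m"
proof -
  have e: "{j - 1..m} = insert m {j - 1..m - 1}" using assms by auto
  have C: "(\<Prod>\<nu>\<in>{j - 1..m}. cc n k a b \<nu>) = cc n k a b m * (\<Prod>\<nu>\<in>{j - 1..m - 1}. cc n k a b \<nu>)"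
    unfolding e using assms by (subst prod.insert) auto
  have e2: "{j + 1..m} = insert m {j + 1..m - 1}" using assms by auto
  have P: "(\<Prod>\<nu>\<in>{j + 1..m}. k \<nu> * ff a b \<nu>) = k m * ff a b m * (\<Prod>\<nu>\<in>{j + 1..m - 1}. k \<nu> * ff a b \<nu>)"
    unfolding e2 using assms by (subst prod.insert) auto
  show ?thesis unfolding tt_def using C P by (simp add: field_simps)
qed

context
  fixes n :: nat and k a b :: "nat \<Rightarrow> 'a::field" and j :: nat
  assumes n2: "n \<ge> 2" and k1: "k 1 \<noteq> 0" and cnz: "\<forall>i\<in>{1..n}. cc n k a b i \<noteq> 0"
    and j1: "1 \<le> j" and jn: "j \<le> n"
begin

lemma tt12: "tt n k a b 1 2 = - a 1 / cc n k a b 1"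
proof -
  have e: "{0..1::nat} = {0,1}" by auto
  have c0: "cc n k a b 0 = 1" by (simp add: cc_def)
  show ?thesis unfolding tt_def dd_def by (simp add: e c0)
qed

lemma c1e: "cc n k a b 1 = k 2 * b 1 - k 1 * a 1"
  using n2 unfolding cc_def by (simp only: one_add_one) simp

lemma a11: "alpha n k a b 1 1 = k 2 / (k 1 * cc n k a b 1)"
  using n2 by (simp add: alpha_def)

lemma cnz': "i \<le> n \<Longrightarrow> cc n k a b i \<noteq> 0"
  using cnz by (cases "i = 0") (auto simp: cc_def)

lemma cc_mid: "1 \<le> i \<Longrightarrow> i < n \<Longrightarrow> cc n k a b i = k (i + 1) * b i - k i * a i"
  by (simp add: cc_def)

lemma alpha_zero: "l + 1 < j \<Longrightarrow> alpha n k a b l j = 0"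
  by (simp add: alpha_def)

lemma alpha_super: "2 \<le> j \<Longrightarrow> alpha n k a b (j - 1) j = - 1 / cc n k a b (j - 1)"
proof -
  assume "2 \<le> j"
  then obtain p where "j = Suc p" by (cases j) auto
  then show ?thesis by (simp add: alpha_def)
qed

lemma tt_first: "tt n k a b j (j + 1) = - dd k a b (j - 1) / (cc n k a b (j - 1) * cc n k a b j)"
proof -
  have e: "{j - 1..j} = {j - 1, j}" using j1 by auto
  have p: "(\<Prod>\<nu>\<in>{j - 1..j}. cc n k a b \<nu>) = cc n k a b (j - 1) * cc n k a b j"
    unfolding e using j1 by simp
  show ?thesis unfolding tt_def using j1 p by simp
qed

lemma tail: "j + 1 \<le> m \<Longrightarrow> m \<le> n \<Longrightarrow> (\<Sum>l\<in>{m..n}. b l * alpha n k a b l j) = tt n k a b j m"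
proof (induction "n - m" arbitrary: m)
  case 0
  then have m: "m = n" by simp
  have al: "alpha n k a b n j = gg n k n * tt n k a b j n / cc n k a b n"
    using alpha_below[of j n] 0 j1 m by simp
  have bn: "b n \<noteq> 0" using cnz' [of n] n2 by (simp add: cc_def)
  show ?case using m al bn n2 by (simp add: gg_def cc_def)
next
  case (Suc q)
  then have mn: "m < n" and m1: "1 \<le> m" using j1 by auto
  have IH: "(\<Sum>l\<in>{m + 1..n}. b l * alpha n k a b l j) = tt n k a b j (m + 1)"
    using Suc by simp
  have e: "{m..n} = insert m {m + 1..n}" using mn by auto
  have al: "alpha n k a b m j = gg n k m * tt n k a b j m / cc n k a b m"
    using alpha_below[of j m] Suc j1 by simp
  have st: "tt n k a b j (m + 1) = - k m * ff a b m * tt n k a b j m / cc n k a b m"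
    using tt_step[of j m] Suc j1 by simp
  have cm: "cc n k a b m \<noteq> 0" using cnz' mn by simp
  have cme: "cc n k a b m = k (m + 1) * b m - k m * a m" using cc_mid m1 mn by simp
  have "(\<Sum>l\<in>{m..n}. b l * alpha n k a b l j)
      = b m * (gg n k m * tt n k a b j m / cc n k a b m)
        - k m * ff a b m * tt n k a b j m / cc n k a b m"
    unfolding e using IH al st by simp
  also have "\<dots> = (b m * gg n k m - k m * ff a b m) * tt n k a b j m / cc n k a b m"
    by (simp add: diff_divide_distrib algebra_simps)
  also have "b m * gg n k m - k m * ff a b m = cc n k a b m"
    using mn by (simp add: gg_def ff_def cme algebra_simps)
  also have "cc n k a b m * tt n k a b j m / cc n k a b m = tt n k a b j m"
    using cm by simp
  finally show ?case .
qed

lemma head_j: "(\<Sum>l\<in>{1..<j}. k l * a l * alpha n k a b l j)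
   = (if j = 1 then 0 else - k (j - 1) * a (j - 1) / cc n k a b (j - 1))"
proof (cases "j = 1")
  case True then show ?thesis by simp
next
  case False
  then have j2: "2 \<le> j" using j1 by simp
  have e: "{1..<j} = insert (j - 1) {1..<j - 1}" using j2 by auto
  have z: "(\<Sum>l\<in>{1..<j - 1}. k l * a l * alpha n k a b l j) = 0"
    by (rule sum.neutral) (auto simp: alpha_zero)
  show ?thesis unfolding e using False j2 z alpha_super by simp
qed

lemma head: "j + 1 \<le> i \<Longrightarrow> i \<le> n \<Longrightarrow>
   (\<Sum>l\<in>{1..<i}. k l * a l * alpha n k a b l j) = - k i * tt n k a b j i"
proof (induction i rule: dec_induct)
  case base
  have jn': "j < n" using base by simp
  have e: "{1..<j + 1} = insert j {1..<j}" using j1 by auto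
  have S: "(\<Sum>l\<in>{1..<j + 1}. k l * a l * alpha n k a b l j)
     = k j * a j * alpha n k a b j j + (if j = 1 then 0 else - k (j - 1) * a (j - 1) / cc n k a b (j - 1))"
    unfolding e using head_j by simp
  have cj: "cc n k a b j \<noteq> 0" using cnz' jn by simp
  show ?case
  proof (cases "j = 1")
    case True
    have jj: "j + 1 = 2" using True by simp
    have "(\<Sum>l\<in>{1..<j + 1}. k l * a l * alpha n k a b l j) = k 1 * a 1 * (k 2 / (k 1 * cc n k a b 1))"
      using S True a11 by simp
    also have "\<dots> = - k 2 * tt n k a b 1 2"
      using tt12 k1 by simp
    finally show ?thesis unfolding jj using True by simp
  next
    case False
    then have j2: "2 \<le> j" using j1 by simp
    have cj1: "cc n k a b (j - 1) \<noteq> 0" using cnz' jn by simp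
    define X where "X = k (j + 1) * b (j - 1) - k (j - 1) * a (j - 1)"
    have ajj: "alpha n k a b j j = X / (cc n k a b (j - 1) * cc n k a b j)"
      using False jn' unfolding X_def by (simp add: alpha_def)
    have ce1: "cc n k a b (j - 1) = k j * b (j - 1) - k (j - 1) * a (j - 1)"
      using cc_mid[of "j - 1"] j2 jn' by simp
    have ce: "cc n k a b j = k (j + 1) * b j - k j * a j"
      using cc_mid[of j] j2 jn' by simp
    have de: "dd k a b (j - 1) = k j * a j * b (j - 1) - k (j - 1) * a (j - 1) * b j"
      using j2 by (simp add: dd_def)
    have "k j * a j * alpha n k a b j j - k (j - 1) * a (j - 1) / cc n k a b (j - 1)
        = (k j * a j * X
           - k (j - 1) * a (j - 1) * cc n k a b j) / (cc n k a b (j - 1) * cc n k a b j)"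
      using cj cj1 ajj by (simp add: field_simps)
    also have "k j * a j * X
           - k (j - 1) * a (j - 1) * cc n k a b j = k (j + 1) * dd k a b (j - 1)"
      unfolding ce de X_def by (simp add: algebra_simps)
    finally show ?thesis using S False tt_first by simp
  qed
next
  case (step m)
  have mn: "m < n" using step by simp
  have m1: "1 \<le> m" using step j1 by simp
  have e: "{1..<Suc m} = insert m {1..<m}" using m1 by auto
  have al: "alpha n k a b m j = gg n k m * tt n k a b j m / cc n k a b m"
    using alpha_below[of j m] step j1 by simp
  have st: "tt n k a b j (m + 1) = - k m * ff a b m * tt n k a b j m / cc n k a b m"
    using tt_step[of j m] step j1 by simp
  have cm: "cc n k a b m \<noteq> 0" using cnz' mn by simp
  have cme: "cc n k a b m = k (m + 1) * b m - k m * a m" using cc_mid m1 mn by simp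
  have "(\<Sum>l\<in>{1..<Suc m}. k l * a l * alpha n k a b l j)
      = - k m * tt n k a b j m + k m * a m * (gg n k m * tt n k a b j m / cc n k a b m)"
    unfolding e using step mn al by simp
  also have "\<dots> = (k m * (a m * gg n k m - cc n k a b m)) * tt n k a b j m / cc n k a b m"
    using cm by (simp add: field_simps)
  also have "k m * (a m * gg n k m - cc n k a b m) = k (m + 1) * k m * ff a b m"
    using mn by (simp add: gg_def ff_def cme algebra_simps)
  also have "k (m + 1) * k m * ff a b m * tt n k a b j m / cc n k a b m = - k (Suc m) * tt n k a b j (Suc m)"
    using st cm by simp
  finally show ?case .
qed

lemma tail_j: "2 \<le> j \<Longrightarrow> (\<Sum>l\<in>{j..n}. b l * alpha n k a b l j) = b (j - 1) / cc n k a b (j - 1)"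
proof -
  assume j2: "2 \<le> j"
  have cj: "cc n k a b j \<noteq> 0" using cnz' jn by simp
  have cj1: "cc n k a b (j - 1) \<noteq> 0" using cnz' jn by simp
  show ?thesis
  proof (cases "j = n")
    case True
    have bn: "cc n k a b n = b n" using n2 by (simp add: cc_def)
    show ?thesis using True j2 cj cj1 bn by (simp add: alpha_def)
  next
    case False
    then have jn': "j < n" using jn by simp
    have e: "{j..n} = insert j {j + 1..n}" using jn' by auto
    have T: "(\<Sum>l\<in>{j + 1..n}. b l * alpha n k a b l j) = - dd k a b (j - 1) / (cc n k a b (j - 1) * cc n k a b j)"
      using tail[of "j + 1"] tt_first jn' by simp
    define X where "X = k (j + 1) * b (j - 1) - k (j - 1) * a (j - 1)"
    have ajj: "alpha n k a b j j = X / (cc n k a b (j - 1) * cc n k a b j)"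
      using False j2 unfolding X_def by (simp add: alpha_def)
    have ce: "cc n k a b j = k (j + 1) * b j - k j * a j"
      using cc_mid[of j] j2 jn' by simp
    have de: "dd k a b (j - 1) = k j * a j * b (j - 1) - k (j - 1) * a (j - 1) * b j"
      using j2 by (simp add: dd_def)
    have "(\<Sum>l\<in>{j..n}. b l * alpha n k a b l j)
       = b j * alpha n k a b j j + (\<Sum>l\<in>{j + 1..n}. b l * alpha n k a b l j)"
      unfolding e by simp
    also have "\<dots> = b j * (X
               / (cc n k a b (j - 1) * cc n k a b j)) + (- dd k a b (j - 1) / (cc n k a b (j - 1) * cc n k a b j))"
      by (simp only: ajj T)
    also have "\<dots> = (b j * X - dd k a b (j - 1))
         / (cc n k a b (j - 1) * cc n k a b j)"
      by (simp add: diff_divide_distrib)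
    also have "b j * X - dd k a b (j - 1)
       = b (j - 1) * cc n k a b j" unfolding de ce X_def by (simp add: algebra_simps)
    finally show ?thesis using cj by simp
  qed
qed

lemma entry: "1 \<le> i \<Longrightarrow> i \<le> n \<Longrightarrow>
  (\<Sum>l\<in>{1..n}. (if i \<le> l then k i * b l else k l * a l) * alpha n k a b l j) = (if i = j then 1 else 0)"
proof -
  assume i1: "1 \<le> i" and iN: "i \<le> n"
  have e: "{1..n} = {1..<i} \<union> {i..n}" using i1 iN by auto
  have "(\<Sum>l\<in>{1..n}. (if i \<le> l then k i * b l else k l * a l) * alpha n k a b l j)
      = (\<Sum>l\<in>{1..<i}. (if i \<le> l then k i * b l else k l * a l) * alpha n k a b l j)
        + (\<Sum>l\<in>{i..n}. (if i \<le> l then k i * b l else k l * a l) * alpha n k a b l j)"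
    unfolding e by (rule sum.union_disjoint) auto
  also have "(\<Sum>l\<in>{1..<i}. (if i \<le> l then k i * b l else k l * a l) * alpha n k a b l j)
      = (\<Sum>l\<in>{1..<i}. k l * a l * alpha n k a b l j)" by (rule sum.cong) auto
  also have "(\<Sum>l\<in>{i..n}. (if i \<le> l then k i * b l else k l * a l) * alpha n k a b l j)
      = k i * (\<Sum>l\<in>{i..n}. b l * alpha n k a b l j)"
    by (simp add: sum_distrib_left mult.assoc)
  finally have E: "(\<Sum>l\<in>{1..n}. (if i \<le> l then k i * b l else k l * a l) * alpha n k a b l j)
     = (\<Sum>l\<in>{1..<i}. k l * a l * alpha n k a b l j) + k i * (\<Sum>l\<in>{i..n}. b l * alpha n k a b l j)" .
  consider "j < i" | "i = j" | "i < j" by linarith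
  then show ?thesis
  proof cases
    case 1
    then show ?thesis unfolding E using head[of i] tail[of i] iN by simp
  next
    case 2
    show ?thesis
    proof (cases "j = 1")
      case True
      have e1: "{1..n} = insert 1 {2..n}" using n2 by auto
      have T: "(\<Sum>l\<in>{2..n}. b l * alpha n k a b l j) = - a 1 / cc n k a b 1"
        using tail[of 2] tt12 True n2 by simp
      note c1 = c1e
      have c1z: "cc n k a b 1 \<noteq> 0" using cnz n2 by simp
      have "k 1 * (\<Sum>l\<in>{1..n}. b l * alpha n k a b l 1) = k 1 * (b 1 * (k 2 / (k 1 * cc n k a b 1)) - a 1 / cc n k a b 1)"
        unfolding e1 using T True a11 by simp
      also have "\<dots> = (k 2 * b 1 - k 1 * a 1) / cc n k a b 1" using k1 c1z by (simp add: field_simps)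
      also have "\<dots> = 1" using c1 c1z by simp
      finally show ?thesis unfolding E using 2 True by simp
    next
      case False
      then have j2: "2 \<le> j" using j1 by simp
      have ce1: "cc n k a b (j - 1) = k j * b (j - 1) - k (j - 1) * a (j - 1)"
        using cc_mid[of "j - 1"] j2 jn by simp
      have cj1: "cc n k a b (j - 1) \<noteq> 0" using cnz' jn by simp
      have "- k (j - 1) * a (j - 1) / cc n k a b (j - 1) + k j * (b (j - 1) / cc n k a b (j - 1))
          = cc n k a b (j - 1) / cc n k a b (j - 1)" unfolding ce1 by (simp add: field_simps)
      then show ?thesis unfolding E using 2 False head_j tail_j j2 cj1 by simp
    qed
  next
    case 3
    then have j2: "2 \<le> j" using i1 by simp
    have H: "(\<Sum>l\<in>{1..<i}. k l * a l * alpha n k a b l j) = 0"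
      by (rule sum.neutral) (use 3 in \<open>auto simp: alpha_zero\<close>)
    have e2: "{i..n} = {i..<j - 1} \<union> {j - 1..n}" using 3 jn by auto
    have Z: "(\<Sum>l\<in>{i..<j - 1}. b l * alpha n k a b l j) = 0"
      by (rule sum.neutral) (auto simp: alpha_zero)
    have e3: "{j - 1..n} = insert (j - 1) {j..n}" using j2 jn by auto
    have "j - 1 \<le> n" using jn j2 by linarith
    then have cj1: "cc n k a b (j - 1) \<noteq> 0" using cnz' by simp
    have "(\<Sum>l\<in>{i..n}. b l * alpha n k a b l j)
       = (\<Sum>l\<in>{i..<j - 1}. b l * alpha n k a b l j) + (\<Sum>l\<in>{j - 1..n}. b l * alpha n k a b l j)"
      unfolding e2 by (rule sum.union_disjoint) auto
    also have "\<dots> = 0" unfolding Z e3 using j2 alpha_super tail_j by simp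
    finally show ?thesis unfolding E H using 3 by simp
  qed
qed

end


lemma A1_alpha:
  fixes n :: nat and k a b :: "nat \<Rightarrow> 'a::field"
  assumes n2: "n \<ge> 2" and k1: "k 1 \<noteq> 0" and cnz: "\<forall>i\<in>{1..n}. cc n k a b i \<noteq> 0"
  shows "A1_mat n k a b * alpha_mat n k a b = 1\<^sub>m n"
proof (rule eq_matI)
  fix i j assume i: "i < dim_row (1\<^sub>m n :: 'a mat)" and j: "j < dim_col (1\<^sub>m n :: 'a mat)"
  then have iN: "i < n" and jN: "j < n" by auto
  have "(A1_mat n k a b * alpha_mat n k a b) $$ (i, j)
      = (\<Sum>l\<in>{0..<n}. (if Suc i \<le> Suc l then k (Suc i) * b (Suc l) else k (Suc l) * a (Suc l))
            * alpha n k a b (Suc l) (Suc j))"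
    using iN jN by (simp add: A1_mat_def alpha_mat_def scalar_prod_def Let_def)
  also have "\<dots> = (\<Sum>l\<in>{Suc 0..<Suc n}. (if Suc i \<le> l then k (Suc i) * b l else k l * a l)
            * alpha n k a b l (Suc j))"
    by (rule sum.shift_bounds_Suc_ivl[symmetric])
  also have "{Suc 0..<Suc n} = {1..n}" by auto
  also have "(\<Sum>l\<in>{1..n}. (if Suc i \<le> l then k (Suc i) * b l else k l * a l)
            * alpha n k a b l (Suc j)) = (if Suc i = Suc j then 1 else 0)"
    by (rule entry[OF n2 k1 cnz]) (use iN jN in auto)
  finally show "(A1_mat n k a b * alpha_mat n k a b) $$ (i, j) = 1\<^sub>m n $$ (i, j)"
    using iN jN by simp
qed (auto simp: A1_mat_def alpha_mat_def)

theorem mainTheorem1: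
  fixes n :: nat and k a b :: "nat \<Rightarrow> 'a::field"
  assumes "n \<ge> 2"
    and "k 1 \<noteq> 0"
    and "\<forall>i\<in>{1..n}. cc n k a b i \<noteq> 0"
  shows "invertible_mat (A1_mat n k a b)
         \<and> inverts_mat (A1_mat n k a b) (alpha_mat n k a b)
         \<and> inverts_mat (alpha_mat n k a b) (A1_mat n k a b)"
proof -
  have AB: "A1_mat n k a b * alpha_mat n k a b = 1\<^sub>m n" by (rule A1_alpha[OF assms])
  have cA: "A1_mat n k a b \<in> carrier_mat n n" by (simp add: A1_mat_def)
  have cB: "alpha_mat n k a b \<in> carrier_mat n n" by (simp add: alpha_mat_def)
  have BA: "alpha_mat n k a b * A1_mat n k a b = 1\<^sub>m n"
    by (rule mat_mult_left_right_inverse[OF cA cB AB])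
  have i1: "inverts_mat (A1_mat n k a b) (alpha_mat n k a b)"
    using AB cA by (simp add: inverts_mat_def)
  have i2: "inverts_mat (alpha_mat n k a b) (A1_mat n k a b)"
    using BA cB by (simp add: inverts_mat_def)
  have "invertible_mat (A1_mat n k a b)"
    unfolding invertible_mat_def using i1 i2 cA by auto
  then show ?thesis using i1 i2 by simp
qed

end
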